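(* In the setting described in the context, let $S_1(B)$ be the set of points $(x_1,x_2,x_3,y_1,y_2,y_3)\in S_0(B)$ for which there exist non-zero rationals $g$ and $\nu$ such that \[a_2x_1=\nu\{4a_1y_1-5g^2a_2y_2\}\quad\text{and}\quad a_1x_2=\nu g^3\{5a_1y_1-4g^2a_2y_2\},\] and let $S_1^*(B)$ be the set of quadruples $(x_1,x_2,y_1,y_2)$ for which there is a pair $(x_3,y_3)$ with $(x_1,x_2,x_3,y_1,y_2,y_3)\in S_1(B)$. Then \[\#S_1(B)=\#S_1^*(B)\ll B^{1/2}.\]
   Context: Let $a_1,a_2,a_3$ be non-zero square-free pairwise coprime integers, let $B\ge 2$, and let $X_1,X_2,X_3,Y_1,Y_2,Y_3$ be powers of 2 not exceeding $2B$ with $X_i^2Y_i^3\le 32B/|a_i|$ for $i=1,2,3$, and assume moreover that $B^{1/5-1/60}\le X_k\le B^{1/5+1/60}$ and $B^{1/5-1/90}\le Y_k\le B^{1/5+1/90}$ for $k=1,2,3$. Let $S_0(B)$ be the set of 6-tuples of positive integers $(x_1,x_2,x_3,y_1,y_2,y_3)$ with $\tfrac12X_i<x_i\le X_i$ and $\tfrac12Y_i<y_i\le Y_i$ ($i=1,2,3$), satisfying $a_1x_1^2y_1^3+a_2x_2^2y_2^3+a_3x_3^2y_3^3=0$, $\gcd(x_1y_1,x_2y_2,x_3y_3)=\gcd(a_1a_2a_3,x_1x_2x_3y_1y_2y_3)=1$, and with $a_1y_1,a_2y_2,a_3y_3$ square-free. The implied constant is absolute. *)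

theory Defs
  imports Complex_Main "HOL-Computational_Algebra.Squarefree"
begin

definition pow2 :: "nat \<Rightarrow> bool" where
  "pow2 n \<longleftrightarrow> (\<exists>k::nat. n = 2 ^ k)"

text \<open>The set S_0(B); it depends on B only through the boxes X_i, Y_i.
  Tuples are (x1, x2, x3, y1, y2, y3).\<close>
definition S0 :: "int \<Rightarrow> int \<Rightarrow> int \<Rightarrow> nat \<Rightarrow> nat \<Rightarrow> nat \<Rightarrow> nat \<Rightarrow> nat \<Rightarrow> nat
    \<Rightarrow> (nat \<times> nat \<times> nat \<times> nat \<times> nat \<times> nat) set" where
  "S0 a1 a2 a3 X1 X2 X3 Y1 Y2 Y3 =
    {(x1, x2, x3, y1, y2, y3).
       0 < x1 \<and> 0 < x2 \<and> 0 < x3 \<and> 0 < y1 \<and> 0 < y2 \<and> 0 < y3 \<and>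
       real X1 / 2 < real x1 \<and> x1 \<le> X1 \<and>
       real X2 / 2 < real x2 \<and> x2 \<le> X2 \<and>
       real X3 / 2 < real x3 \<and> x3 \<le> X3 \<and>
       real Y1 / 2 < real y1 \<and> y1 \<le> Y1 \<and>
       real Y2 / 2 < real y2 \<and> y2 \<le> Y2 \<and>
       real Y3 / 2 < real y3 \<and> y3 \<le> Y3 \<and>
       a1 * int x1 ^ 2 * int y1 ^ 3 + a2 * int x2 ^ 2 * int y2 ^ 3
         + a3 * int x3 ^ 2 * int y3 ^ 3 = 0 \<and>
       gcd (gcd (x1 * y1) (x2 * y2)) (x3 * y3) = 1 \<and>
       gcd (a1 * a2 * a3) (int (x1 * x2 * x3 * y1 * y2 * y3)) = 1 \<and>
       squarefree (a1 * int y1) \<and> squarefree (a2 * int y2) \<and> squarefree (a3 * int y3)}"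

definition S1 :: "int \<Rightarrow> int \<Rightarrow> int \<Rightarrow> nat \<Rightarrow> nat \<Rightarrow> nat \<Rightarrow> nat \<Rightarrow> nat \<Rightarrow> nat
    \<Rightarrow> (nat \<times> nat \<times> nat \<times> nat \<times> nat \<times> nat) set" where
  "S1 a1 a2 a3 X1 X2 X3 Y1 Y2 Y3 =
    {(x1, x2, x3, y1, y2, y3) \<in> S0 a1 a2 a3 X1 X2 X3 Y1 Y2 Y3.
       \<exists>g \<nu> :: rat. g \<noteq> 0 \<and> \<nu> \<noteq> 0 \<and>
         of_int a2 * of_nat x1 = \<nu> * (4 * of_int a1 * of_nat y1 - 5 * g ^ 2 * of_int a2 * of_nat y2) \<and>
         of_int a1 * of_nat x2 = \<nu> * g ^ 3 * (5 * of_int a1 * of_nat y1 - 4 * g ^ 2 * of_int a2 * of_nat y2)}"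

definition S1star :: "int \<Rightarrow> int \<Rightarrow> int \<Rightarrow> nat \<Rightarrow> nat \<Rightarrow> nat \<Rightarrow> nat \<Rightarrow> nat \<Rightarrow> nat
    \<Rightarrow> (nat \<times> nat \<times> nat \<times> nat) set" where
  "S1star a1 a2 a3 X1 X2 X3 Y1 Y2 Y3 =
    {(x1, x2, y1, y2). \<exists>x3 y3. (x1, x2, x3, y1, y2, y3) \<in> S1 a1 a2 a3 X1 X2 X3 Y1 Y2 Y3}"

end

theory Submission
  imports Defs "HOL-Computational_Algebra.Primes"
begin



lemma oddp_aux:
  fixes A E u v f P p :: int
  assumes "prime p" "p \<noteq> 2" "p dvd u" "coprime u v" "squarefree A"
    "f dvd v^3 * P" "P = 4*A*v^2 - E*u^2"
  shows "\<not> p^2 dvd f"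
proof
  assume h: "p^2 dvd f"
  have cpv: "coprime p v" by (rule coprime_divisors[OF assms(3) dvd_refl assms(4)])
  hence c1: "coprime (p^2) (v^3)" by simp
  have "p^2 dvd v^3 * P" using h assms(6) by (rule dvd_trans)
  hence "p^2 dvd P" using c1 coprime_dvd_mult_right_iff by blast
  moreover have "p^2 dvd E*u^2" using assms(3) by (simp add: dvd_power_same)
  ultimately have "p^2 dvd P + E*u^2" by (rule dvd_add)
  hence h4: "p^2 dvd (4*v^2)*A" using assms(7) by (simp add: algebra_simps)
  have "2 < p" using assms(1,2) prime_ge_2_int[of p] by linarith
  hence "odd p" using assms(1) prime_odd_int by blast 
  hence "coprime p 2" by simp
  hence "coprime p (2*v)" using cpv by simp
  hence "coprime p ((2*v)^2)" by (metis coprime_power_right_iff)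
  moreover have "(2*v)^2 = 4*v^2" by (simp add: power2_eq_square)
  ultimately have "coprime p (4*v^2)" by simp
  hence "coprime (p^2) (4*v^2)" by simp
  hence "p^2 dvd A" using h4 coprime_dvd_mult_right_iff by blast
  hence "p dvd 1" using assms(5) squarefreeD by blast
  thus False using assms(1) by (simp add: prime_int_iff)
qed

lemma neither_common:
  fixes A D u v f P Q p :: int
  assumes "prime p" "\<not> p dvd u" "\<not> p dvd v" "f dvd v^3*P" "f dvd u^3*Q"
    "P = 4*A*v^2 - 5*D*u^2" "Q = 5*A*v^2 - 4*D*u^2" "p^k dvd f"
  shows "p^k dvd 9*A*v^2" "p^k dvd 9*D*u^2"
proof -
  have "coprime p v" using assms(1,3) prime_imp_coprime by blast
  hence "coprime (p^k) (v^3)" by simp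
  hence hP: "p^k dvd P" using assms(4,8) by (meson coprime_dvd_mult_right_iff dvd_trans)
  have "coprime p u" using assms(1,2) prime_imp_coprime by blast
  hence "coprime (p^k) (u^3)" by simp
  hence hQ: "p^k dvd Q" using assms(5,8) by (meson coprime_dvd_mult_right_iff dvd_trans)
  have "p^k dvd 5*Q - 4*P" using hP hQ by (simp add: dvd_diff)
  moreover have "5*Q - 4*P = 9*A*v^2" using assms(6,7) by (simp add: algebra_simps)
  ultimately show "p^k dvd 9*A*v^2" by simp
  have "p^k dvd 4*Q - 5*P" using hP hQ by (simp add: dvd_diff)
  moreover have "4*Q - 5*P = 9*D*u^2" using assms(6,7) by (simp add: algebra_simps)
  ultimately show "p^k dvd 9*D*u^2" by simp
qed

lemma neither_aux1:
  fixes A D u v f P Q p :: int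
  assumes "prime p" "\<not> p dvd u" "\<not> p dvd v" "coprime A D" "f dvd v^3*P" "f dvd u^3*Q"
    "P = 4*A*v^2 - 5*D*u^2" "Q = 5*A*v^2 - 4*D*u^2" "p dvd f" "p \<noteq> 3"
  shows False
proof -
  have h1: "p dvd 9*A*v^2" "p dvd 9*D*u^2"
    using neither_common[OF assms(1-3) assms(5-8), of 1] assms(9) by auto
  have n9: "\<not> p dvd 9"
  proof
    assume "p dvd 9"
    hence "p dvd 3 * 3" by simp
    hence "p dvd 3" using assms(1) prime_dvd_mult_iff by blast
    moreover have "prime (3::int)" by simp
    ultimately have "p = 3" using assms(1) primes_dvd_imp_eq by blast
    thus False using assms(10) by simp
  qed
  have "p dvd A"
  proof -
    have "p dvd 9 * (A * v^2)" using h1(1) by (simp add: mult.assoc)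
    hence "p dvd A * v^2" using n9 assms(1) prime_dvd_mult_iff by blast
    thus ?thesis using assms(1,3) prime_dvd_mult_iff prime_dvd_power by blast
  qed
  moreover have "p dvd D"
  proof -
    have "p dvd 9 * (D * u^2)" using h1(2) by (simp add: mult.assoc)
    hence "p dvd D * u^2" using n9 assms(1) prime_dvd_mult_iff by blast
    thus ?thesis using assms(1,2) prime_dvd_mult_iff prime_dvd_power by blast
  qed
  ultimately have "is_unit p" using assms(4) coprime_common_divisor by blast
  thus False using assms(1) not_prime_unit by blast
qed

lemma neither_aux3:
  fixes A D u v f P Q :: int
  assumes "\<not> 3 dvd u" "\<not> 3 dvd v" "coprime A D" "f dvd v^3*P" "f dvd u^3*Q"
    "P = 4*A*v^2 - 5*D*u^2" "Q = 5*A*v^2 - 4*D*u^2" "27 dvd f"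
  shows False
proof -
  have p3: "prime (3::int)" by simp
  have h1: "3^3 dvd 9*A*v^2" "3^3 dvd 9*D*u^2"
    using neither_common[OF p3 assms(1,2) assms(4-7), of 3] assms(8) by auto
  have "3 dvd A * v^2" using h1(1) by (auto simp: dvd_def)
  hence "3 dvd A" using p3 assms(2) prime_dvd_mult_iff prime_dvd_power by blast
  moreover have "3 dvd D * u^2" using h1(2) by (auto simp: dvd_def)
  hence "3 dvd D" using p3 assms(1) prime_dvd_mult_iff prime_dvd_power by blast
  ultimately have "is_unit (3::int)" using assms(3) coprime_common_divisor by blast
  thus False by simp
qed

lemma two_u:
  fixes A D u v f P Q :: int
  assumes "even u" "coprime u v" "squarefree A" "coprime A D" "f dvd v^3*P" "f dvd u^3*Q"
    "P = 4*A*v^2 - 5*D*u^2" "Q = 5*A*v^2 - 4*D*u^2" "16 dvd f"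
  shows False
proof -
  have ov: "odd v"
  proof
    assume "even v"
    hence "is_unit (2::int)" using assms(1,2) coprime_common_divisor by blast
    thus False by simp
  qed
  have c16v: "coprime (16::int) (v^3)"
  proof -
    have "coprime (2::int) (v^3)" using ov by simp
    hence "coprime ((2::int)^4) (v^3)" by (metis coprime_power_left_iff)
    thus ?thesis by simp
  qed
  have h16P: "16 dvd P"
  proof -
    have "16 dvd v^3 * P" using assms(9,5) by (rule dvd_trans)
    thus ?thesis using c16v coprime_dvd_mult_right_iff by blast
  qed
  show False
  proof (cases "4 dvd u")
    case True
    then obtain w where w: "u = 4*w" by (auto simp: dvd_def)
    have "16 dvd 5*D*u^2" using w by (simp add: power2_eq_square)
    hence "16 dvd P + 5*D*u^2" using h16P by (rule dvd_add[rotated])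
    hence "16 dvd 4 * (A*v^2)" using assms(7) by (simp add: algebra_simps)
    hence "4 dvd A*v^2" by (auto simp: dvd_def)
    moreover have "coprime (4::int) (v^2)"
    proof -
      have "coprime (2::int) (v^2)" using ov by simp
      hence "coprime ((2::int)^2) (v^2)" by (metis coprime_power_left_iff)
      thus ?thesis by simp
    qed
    ultimately have "4 dvd A" using coprime_dvd_mult_left_iff by blast
    hence "2^2 dvd A" by simp
    hence "(2::int) dvd 1" using assms(3) squarefreeD by blast
    thus False by simp
  next
    case False
    obtain w where w: "u = 2*w" using assms(1) by (auto simp: dvd_def)
    have ow: "odd w" using False w by auto
    show False
    proof (cases "even A")
      case False
      have oQ: "odd Q" using assms(8) False ov by simp
      have "coprime (2::int) Q" using oQ by simp
      hence "coprime ((2::int)^4) Q" by (metis coprime_power_left_iff)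
      hence c: "coprime (16::int) Q" by simp
      have "16 dvd u^3 * Q" using assms(9,6) by (rule dvd_trans)
      hence "16 dvd u^3" using c coprime_dvd_mult_left_iff by blast
      hence "16 dvd 8 * w^3" using w by (simp add: power3_eq_cube algebra_simps)
      hence "2 dvd w^3" by (auto simp: dvd_def)
      thus False using ow by simp
    next
      case True
      have oD: "odd D"
      proof
        assume "even D"
        hence "is_unit (2::int)" using True assms(4) coprime_common_divisor by blast
        thus False by simp
      qed
      define X where "X = A*v^2 - 5*D*w^2"
      have "P = 4 * X" using assms(7) w by (simp add: X_def algebra_simps power2_eq_square)
      then obtain k where "4 * X = 16 * k" using h16P by (auto simp: dvd_def)
      hence "X = 2 * (2 * k)" by linarith
      hence "even X" by simp
      hence "even (A*v^2 - 5*D*w^2)" by (simp add: X_def)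
      thus False using True oD ow by simp
    qed
  qed
qed

lemma dvd_prime_powers:
  fixes f T :: int
  assumes "T \<noteq> 0" "\<And>p k. prime p \<Longrightarrow> p^k dvd f \<Longrightarrow> p^k dvd T"
  shows "f dvd T"
proof (cases "f = 0")
  case True
  have "(2::int)^(nat \<bar>T\<bar>) dvd T" using assms(2)[of 2 "nat \<bar>T\<bar>"] True by simp
  hence "\<bar>(2::int)^(nat \<bar>T\<bar>)\<bar> \<le> \<bar>T\<bar>" using assms(1) by (rule dvd_imp_le_int[rotated])
  moreover have "int (nat \<bar>T\<bar>) < 2^(nat \<bar>T\<bar>)" using less_exp[of "nat \<bar>T\<bar>"] by (metis of_nat_less_iff of_nat_numeral of_nat_power)
  ultimately show ?thesis by simp
next
  case False
  show ?thesis
  proof (rule multiplicity_le_imp_dvd[OF False])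
    fix p :: int assume p: "prime p"
    have "p ^ multiplicity p f dvd f" by (rule multiplicity_dvd)
    hence "p ^ multiplicity p f dvd T" using assms(2) p by blast
    thus "multiplicity p f \<le> multiplicity p T" using power_dvd_iff_le_multiplicity assms(1) p
      by (metis multiplicity_unit_left not_prime_unit)
  qed
qed


lemma kle:
  fixes p f :: int
  assumes "\<not> p^n dvd f" "p^k dvd f"
  shows "k < n"
proof (rule ccontr)
  assume "\<not> k < n"
  hence "p^n dvd p^k" by (simp add: le_imp_power_dvd)
  thus False using assms dvd_trans by blast
qed

lemma f_dvd:
  fixes A D u v f P Q :: int
  assumes cuv: "coprime u v" and sA: "squarefree A" and sD: "squarefree D" and cAD: "coprime A D"
    and fP: "f dvd v^3*P" and fQ: "f dvd u^3*Q"
    and Pd: "P = 4*A*v^2 - 5*D*u^2" and Qd: "Q = 5*A*v^2 - 4*D*u^2" and "u \<noteq> 0" "v \<noteq> 0"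
  shows "f dvd 72*u*v"
proof (rule dvd_prime_powers)
  show "72*u*v \<noteq> 0" using assms by simp
  fix p :: int and k :: nat
  assume p: "prime p" and pk: "p^k dvd f"
  have cvu: "coprime v u" using cuv by (simp add: coprime_commute)
  have cDA: "coprime D A" using cAD by (simp add: coprime_commute)
  have fQ': "f dvd u^3*(-Q)" using fQ by simp
  have fP': "f dvd v^3*(-P)" using fP by simp
  have Qd': "-Q = 4*D*u^2 - 5*A*v^2" using Qd by simp
  have Pd': "-P = 5*D*u^2 - 4*A*v^2" using Pd by simp
  have Pd'': "P = 4*A*v^2 - (5*D)*u^2" using Pd by simp
  have Qd'': "-Q = 4*D*u^2 - (5*A)*v^2" using Qd by simp
  show "p^k dvd 72*u*v"
  proof (cases "p = 2")
    case True
    have "k < 4"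
    proof (cases "even u")
      case True
      have "\<not> 16 dvd f" using two_u[OF True cuv sA cAD fP fQ Pd Qd] by blast
      thus ?thesis using kle[of 2 4 f k] pk \<open>p = 2\<close> by simp
    next
      case ou: False
      show ?thesis
      proof (cases "even v")
        case True
        have "\<not> 16 dvd f" using two_u[OF True cvu sD cDA fQ' fP' Qd' Pd'] by blast
        thus ?thesis using kle[of 2 4 f k] pk \<open>p = 2\<close> by simp
      next
        case False
        have "\<not> p dvd u" "\<not> p dvd v" using ou False \<open>p = 2\<close> by auto
        hence "\<not> p dvd f" using neither_aux1[OF p _ _ cAD fP fQ Pd Qd] \<open>p = 2\<close> by fastforce
        thus ?thesis using kle[of p 1 f k] pk by simp
      qed
    qed
    hence "p^k dvd 2^3" using True le_imp_power_dvd[of k 3 "2::int"] by simp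
    moreover have "(2::int)^3 dvd 72*u*v" by (simp add: dvd_def exI[of _ "9*u*v"])
    ultimately show ?thesis using True dvd_trans by blast
  next
    case pn2: False
    show ?thesis
    proof (cases "p dvd u")
      case True
      have "\<not> p^2 dvd f" using oddp_aux[OF p pn2 True cuv sA fP Pd''] .
      hence "k < 2" using kle[of p 2 f k] pk by simp
      hence "p^k dvd u" using True by (cases k) (auto simp: less_2_cases_iff)
      thus ?thesis by (simp add: dvd_mult)
    next
      case npu: False
      show ?thesis
      proof (cases "p dvd v")
        case True
        have "\<not> p^2 dvd f" using oddp_aux[OF p pn2 True cvu sD fQ' Qd''] .
        hence "k < 2" using kle[of p 2 f k] pk by simp
        hence "p^k dvd v" using True by (cases k) (auto simp: less_2_cases_iff)
        thus ?thesis by (simp add: dvd_mult)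
      next
        case npv: False
        show ?thesis
        proof (cases "p = 3")
          case True
          have "\<not> 27 dvd f" using neither_aux3[of u v A D f P Q] npu npv True cAD fP fQ Pd Qd by blast
          hence "k < 3" using kle[of 3 3 f k] pk True by simp
          hence "p^k dvd 3^2" using True le_imp_power_dvd[of k 2 "3::int"] by simp
          moreover have "(3::int)^2 dvd 72*u*v" by (simp add: dvd_def exI[of _ "8*u*v"])
          ultimately show ?thesis using dvd_trans by blast
        next
          case False
          have "\<not> p dvd f" using neither_aux1[OF p npu npv cAD fP fQ Pd Qd] False by blast
          hence "k < 1" using kle[of p 1 f k] pk by simp
          thus ?thesis by simp
        qed
      qed
    qed
  qed
qed



lemma mult_sqf_one:
  fixes p y :: "'a :: factorial_semiring_multiplicative"
  assumes "prime p" "p dvd y" "squarefree y" "y \<noteq> 0"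
  shows "multiplicity p y = 1"
proof -
  have "multiplicity p y \<le> 1" using assms squarefree_factorial_semiring'' by blast
  moreover have "p^1 dvd y" using assms(2) by simp
  hence "1 \<le> multiplicity p y" using multiplicity_geI[OF assms(4)] assms(1) not_prime_unit by blast
  ultimately show ?thesis by simp
qed

lemma y3_aux:
  fixes e S R a3 x3 y3 p :: int
  assumes p: "prime p" and py: "p dvd y3" and sy: "squarefree y3" and pe: "\<not> p dvd e"
    and pa: "\<not> p dvd a3" and eq: "e^2 * (a3 * x3^2 * y3^3) = - (S * R^2)"
    and nz: "x3 \<noteq> 0" "e \<noteq> 0" "a3 \<noteq> 0" "y3 \<noteq> 0"
    and SR: "p dvd S \<Longrightarrow> \<not> p dvd R"
  shows "p^2 dvd S"
proof -
  have L: "e^2 * (a3 * x3^2 * y3^3) \<noteq> 0" using nz by simp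
  hence S0: "S \<noteq> 0" and R0: "R \<noteq> 0" using eq by auto
  show ?thesis
  proof (cases "p dvd S")
    case True
    have "p^3 dvd y3^3" using py by (simp add: dvd_power_same)
    hence "p^3 dvd e^2 * (a3 * x3^2 * y3^3)" by (simp add: dvd_mult)
    hence "p^3 dvd S * R^2" using eq by (metis dvd_minus_iff)
    moreover have "coprime (p^3) (R^2)" using prime_imp_coprime[OF p SR[OF True]] by simp
    ultimately have "p^3 dvd S" using coprime_dvd_mult_left_iff by blast
    moreover have "p^2 dvd p^3" by (rule le_imp_power_dvd) simp
    ultimately show ?thesis using dvd_trans by blast
  next
    case False
    have pe': "prime_elem p" using prime_imp_prime_elem[OF p] .
    have m1: "multiplicity p y3 = 1" using mult_sqf_one p py sy nz(4) by blast
    have "multiplicity p (e^2 * (a3 * x3^2 * y3^3)) = 2 * multiplicity p e + multiplicity p a3 + 2 * multiplicity p x3 + 3 * multiplicity p y3"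
      using nz pe' by (simp add: prime_elem_multiplicity_mult_distrib prime_elem_multiplicity_power_distrib)
    also have "\<dots> = 2 * multiplicity p x3 + 3"
      using pe pa m1 by (simp add: not_dvd_imp_multiplicity_0)
    finally have A: "multiplicity p (e^2 * (a3 * x3^2 * y3^3)) = 2 * multiplicity p x3 + 3" .
    have "multiplicity p (- (S * R^2)) = multiplicity p S + 2 * multiplicity p R"
      using S0 R0 pe' by (simp add: prime_elem_multiplicity_mult_distrib prime_elem_multiplicity_power_distrib)
    also have "\<dots> = 2 * multiplicity p R" using False by (simp add: not_dvd_imp_multiplicity_0)
    finally have B: "multiplicity p (- (S * R^2)) = 2 * multiplicity p R" .
    from A B eq have "2 * multiplicity p x3 + 3 = 2 * multiplicity p R" by simp
    hence False by presburger
    thus ?thesis ..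
  qed
qed

lemma y3sq:
  fixes y3 S :: int
  assumes sy: "squarefree y3" and nz: "y3 \<noteq> 0" "S \<noteq> 0"
    and H: "\<And>p. prime p \<Longrightarrow> p dvd y3 \<Longrightarrow> p \<noteq> 2 \<Longrightarrow> p \<noteq> 3 \<Longrightarrow> p \<noteq> 5 \<Longrightarrow> p^2 dvd S"
  shows "y3^2 dvd 900 * S"
proof (rule multiplicity_le_imp_dvd)
  show "y3^2 \<noteq> 0" using nz by simp
  fix p :: int assume p: "prime p"
  show "multiplicity p (y3^2) \<le> multiplicity p (900 * S)"
  proof (cases "p dvd y3")
    case False
    hence "\<not> p dvd y3^2" using p prime_dvd_power by blast
    thus ?thesis by (simp add: not_dvd_imp_multiplicity_0)
  next
    case True
    have m2: "multiplicity p (y3^2) = 2" using mult_sqf_one[OF p True sy nz(1)]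
        prime_elem_multiplicity_power_distrib[OF prime_imp_prime_elem[OF p] nz(1), of 2] by simp
    have "p^2 dvd 900 * S"
    proof (cases "p = 2 \<or> p = 3 \<or> p = 5")
      case True
      hence "p^2 dvd 900" by (auto simp: dvd_def)
      thus ?thesis by (simp add: dvd_mult2)
    next
      case False
      thus ?thesis using H[OF p True] by (simp add: dvd_mult)
    qed
    moreover have "900 * S \<noteq> 0" using nz by simp
    ultimately have "2 \<le> multiplicity p (900 * S)" using multiplicity_geI p not_prime_unit by blast
    thus ?thesis using m2 by simp
  qed
qed

lemma sq_cube_unique:
  fixes x y x' y' :: nat
  assumes "x > 0" "x' > 0" "y > 0" "y' > 0" "squarefree y" "squarefree y'"
    "x^2 * y^3 = x'^2 * y'^3"
  shows "y = y' \<and> x = x'"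
proof -
  have "normalize y = normalize y'"
  proof (rule multiplicity_eq_imp_eq)
    show "y \<noteq> 0" "y' \<noteq> 0" using assms by auto
    fix p :: nat assume p: "prime p"
    have pe': "prime_elem p" using prime_imp_prime_elem[OF p] .
    have a: "multiplicity p y \<le> 1" using assms(3,5) p squarefree_factorial_semiring'' by blast
    have b: "multiplicity p y' \<le> 1" using assms(4,6) p squarefree_factorial_semiring'' by blast
    have "multiplicity p (x^2 * y^3) = 2 * multiplicity p x + 3 * multiplicity p y"
      using assms(1,3) pe' by (simp add: prime_elem_multiplicity_mult_distrib prime_elem_multiplicity_power_distrib)
    moreover have "multiplicity p (x'^2 * y'^3) = 2 * multiplicity p x' + 3 * multiplicity p y'"
      using assms(2,4) pe' by (simp add: prime_elem_multiplicity_mult_distrib prime_elem_multiplicity_power_distrib)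
    ultimately have "2 * multiplicity p x + 3 * multiplicity p y = 2 * multiplicity p x' + 3 * multiplicity p y'"
      using assms(7) by simp
    thus "multiplicity p y = multiplicity p y'" using a b by presburger
  qed
  hence yy: "y = y'" by simp
  hence "x^2 = x'^2" using assms(7) assms(4) by simp
  hence "x = x'" by (simp add: power2_eq_iff_nonneg)
  thus ?thesis using yy by simp
qed



lemma pair_cop:
  fixes x1 y1 x2 y2 x3 y3 :: nat and c1 c2 c3 :: int
  assumes eq: "c1 * int x1^2 * int y1^3 + c2 * int x2^2 * int y2^3 + c3 * int x3^2 * int y3^3 = 0"
    and g: "gcd (gcd (x1*y1) (x2*y2)) (x3*y3) = 1" and c: "coprime c3 (int (x1*y1))"
  shows "coprime (x1*y1) (x2*y2)"
proof (rule ccontr)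
  assume "\<not> coprime (x1*y1) (x2*y2)"
  hence "gcd (x1*y1) (x2*y2) \<noteq> 1" by (simp add: coprime_iff_gcd_eq_1)
  then obtain p where p: "prime p" "p dvd gcd (x1*y1) (x2*y2)" using prime_factor_nat by blast
  hence p1: "p dvd x1*y1" and p2: "p dvd x2*y2" by auto
  have d1: "x1*y1 dvd x1^2*y1^3" by (simp add: power2_eq_square power3_eq_cube)
  have d2: "x2*y2 dvd x2^2*y2^3" by (simp add: power2_eq_square power3_eq_cube)
  have "int p dvd int (x1^2*y1^3)" using dvd_trans[OF p1 d1] by (simp only: int_dvd_int_iff)
  hence q1: "int p dvd int x1^2 * int y1^3" by simp
  have "int p dvd int (x2^2*y2^3)" using dvd_trans[OF p2 d2] by (simp only: int_dvd_int_iff)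
  hence q2: "int p dvd int x2^2 * int y2^3" by simp
  have "c3 * int x3^2 * int y3^3 = - (c1 * (int x1^2 * int y1^3) + c2 * (int x2^2 * int y2^3))"
    using eq by (simp add: algebra_simps)
  moreover have "int p dvd c1 * (int x1^2 * int y1^3) + c2 * (int x2^2 * int y2^3)"
    using q1 q2 by (simp add: dvd_add dvd_mult)
  ultimately have "int p dvd c3 * int x3^2 * int y3^3" by (metis dvd_minus_iff)
  hence "int p dvd c3 * (int x3^2 * int y3^3)" by (simp add: mult.assoc)
  moreover have "coprime (int p) c3"
  proof -
    have "int p dvd int (x1*y1)" using p1 by (simp only: int_dvd_int_iff)
    thus ?thesis using c coprime_divisors[of "int p" "int (x1*y1)" c3 c3] by (simp add: coprime_commute)
  qed
  ultimately have "int p dvd int x3^2 * int y3^3" using coprime_dvd_mult_right_iff by blast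
  hence "int p dvd int (x3^2 * y3^3)" by simp
  hence "p dvd x3^2 * y3^3" by (simp only: int_dvd_int_iff)
  hence "p dvd x3 \<or> p dvd y3" using p(1) prime_dvd_mult_iff prime_dvd_power by blast
  hence "p dvd x3*y3" by auto
  hence "p dvd gcd (gcd (x1*y1) (x2*y2)) (x3*y3)" using p(2) by simp
  hence "p dvd 1" using g by simp
  thus False using p(1) by simp
qed




lemma key:
  fixes a1 a2 a3 :: int and x1 x2 x3 y1 y2 y3 X1 X2 X3 Y1 Y2 Y3 :: nat
  assumes nz: "a1 \<noteq> 0" "a2 \<noteq> 0" "a3 \<noteq> 0" and ca12: "coprime a1 a2"
    and mem: "(x1,x2,x3,y1,y2,y3) \<in> S1 a1 a2 a3 X1 X2 X3 Y1 Y2 Y3"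
  shows "(int y1 * int y2 * int y3)^2 \<le> 4665600 * (\<bar>a3\<bar> * int x3^2 * int y3^3)"
proof -
  have S0: "(x1,x2,x3,y1,y2,y3) \<in> S0 a1 a2 a3 X1 X2 X3 Y1 Y2 Y3"
    and ex: "\<exists>g \<nu> :: rat. g \<noteq> 0 \<and> \<nu> \<noteq> 0 \<and>
         of_int a2 * of_nat x1 = \<nu> * (4 * of_int a1 * of_nat y1 - 5 * g ^ 2 * of_int a2 * of_nat y2) \<and>
         of_int a1 * of_nat x2 = \<nu> * g ^ 3 * (5 * of_int a1 * of_nat y1 - 4 * g ^ 2 * of_int a2 * of_nat y2)"
    using mem by (auto simp: S1_def)
  have pos: "0 < x1" "0 < x2" "0 < x3" "0 < y1" "0 < y2" "0 < y3" using S0 by (simp_all add: S0_def)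
  have eq: "a1 * int x1 ^ 2 * int y1 ^ 3 + a2 * int x2 ^ 2 * int y2 ^ 3 + a3 * int x3 ^ 2 * int y3 ^ 3 = 0"
    using S0 by (simp add: S0_def)
  have g3: "gcd (gcd (x1 * y1) (x2 * y2)) (x3 * y3) = 1" using S0 by (simp add: S0_def)
  have ga: "gcd (a1 * a2 * a3) (int (x1 * x2 * x3 * y1 * y2 * y3)) = 1" using S0 by (simp add: S0_def)
  have sqA: "squarefree (a1 * int y1)" and sqD: "squarefree (a2 * int y2)"
    and sq3: "squarefree (a3 * int y3)" using S0 by (simp_all add: S0_def)
  have cop: "coprime (a1 * a2 * a3) (int (x1 * x2 * x3 * y1 * y2 * y3))"
    using ga by (simp add: coprime_iff_gcd_eq_1)
  have cA: "coprime a (int n)" if "a dvd a1 * a2 * a3" "n dvd x1 * x2 * x3 * y1 * y2 * y3" for a n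
  proof -
    have "int n dvd int (x1 * x2 * x3 * y1 * y2 * y3)" using that(2) by (simp only: int_dvd_int_iff)
    thus ?thesis using coprime_divisors[OF that(1) _ cop] by blast
  qed
  have ca1x1: "coprime a1 (int x1)" by (rule cA) (simp_all add: dvd_mult2 dvd_mult)
  have ca2x2: "coprime a2 (int x2)" by (rule cA) (simp_all add: dvd_mult2 dvd_mult)
  have ca1y2: "coprime a1 (int y2)" by (rule cA) (simp_all add: dvd_mult2 dvd_mult)
  have ca2y1: "coprime a2 (int y1)" by (rule cA) (simp_all add: dvd_mult2 dvd_mult)
  have ca1y3: "coprime a1 (int y3)" by (rule cA) (simp_all add: dvd_mult2 dvd_mult)
  have ca2y3: "coprime a2 (int y3)" by (rule cA) (simp_all add: dvd_mult2 dvd_mult)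
  have ca3y3: "coprime a3 (int y3)" by (rule cA) (simp_all add: dvd_mult2 dvd_mult)
  have ca3x1y1: "coprime a3 (int (x1*y1))" by (rule cA) (simp_all add: dvd_mult2 dvd_mult)
  have ca2x1y1: "coprime a2 (int (x1*y1))" by (rule cA) (simp_all add: dvd_mult2 dvd_mult)
  have ca1x2y2: "coprime a1 (int (x2*y2))" by (rule cA) (simp_all add: dvd_mult2 dvd_mult)
  have c12: "coprime (x1*y1) (x2*y2)" by (rule pair_cop[OF eq g3 ca3x1y1])
  have c13: "coprime (x1*y1) (x3*y3)"
  proof (rule pair_cop[of a1 x1 y1 a3 x3 y3 a2 x2 y2])
    show "a1 * int x1 ^ 2 * int y1 ^ 3 + a3 * int x3 ^ 2 * int y3 ^ 3 + a2 * int x2 ^ 2 * int y2 ^ 3 = 0"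
      using eq by linarith
    show "gcd (gcd (x1 * y1) (x3 * y3)) (x2 * y2) = 1" using g3 by (simp add: ac_simps)
    show "coprime a2 (int (x1 * y1))" by (rule ca2x1y1)
  qed
  have c23: "coprime (x2*y2) (x3*y3)"
  proof (rule pair_cop[of a2 x2 y2 a3 x3 y3 a1 x1 y1])
    show "a2 * int x2 ^ 2 * int y2 ^ 3 + a3 * int x3 ^ 2 * int y3 ^ 3 + a1 * int x1 ^ 2 * int y1 ^ 3 = 0"
      using eq by linarith
    show "gcd (gcd (x2 * y2) (x3 * y3)) (x1 * y1) = 1" using g3 by (simp add: ac_simps)
    show "coprime a1 (int (x2 * y2))" by (rule ca1x2y2)
  qed
  have cx12: "coprime (int x1) (int x2)" using c12 by simp
  have cy12: "coprime (int y1) (int y2)" using c12 by simp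
  have cy13: "coprime (int y1) (int y3)" using c13 by simp
  have cy23: "coprime (int y2) (int y3)" using c23 by simp
  obtain g \<nu> :: rat where gn: "g \<noteq> 0" "\<nu> \<noteq> 0"
    and E1: "of_int a2 * of_nat x1 = \<nu> * (4 * of_int a1 * of_nat y1 - 5 * g ^ 2 * of_int a2 * of_nat y2)"
    and E2: "of_int a1 * of_nat x2 = \<nu> * g ^ 3 * (5 * of_int a1 * of_nat y1 - 4 * g ^ 2 * of_int a2 * of_nat y2)"
    using ex by blast
  obtain u v where q: "quotient_of g = (u, v)" by (cases "quotient_of g") auto
  have v0: "v > 0" using quotient_of_denom_pos[OF q] .
  have cuv: "coprime u v" using quotient_of_coprime[OF q] .
  have gdef: "g = of_int u / of_int v" using quotient_of_div[OF q] .
  have gv: "g * of_int v = of_int u" using gdef v0 by simp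
  have u0: "u \<noteq> 0" using gdef gn(1) by auto
  define A where "A = a1 * int y1"
  define D where "D = a2 * int y2"
  define P where "P = 4*A*v^2 - 5*D*u^2"
  define Q where "Q = 5*A*v^2 - 4*D*u^2"
  have E1': "of_int a2 * of_nat x1 * (of_int v)^2 = \<nu> * of_int P"
  proof -
    have "\<nu> * of_int P = \<nu> * (4 * of_int A * (of_int v)^2 - 5 * of_int D * (of_int u)^2)"
      by (simp add: P_def)
    also have "\<dots> = \<nu> * (4 * of_int A * (of_int v)^2 - 5 * of_int D * (g * of_int v)^2)"
      using gv by simp
    also have "\<dots> = (\<nu> * (4 * of_int a1 * of_nat y1 - 5 * g ^ 2 * of_int a2 * of_nat y2)) * (of_int v)^2"
      by (simp add: A_def D_def algebra_simps power_mult_distrib)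
    also have "\<dots> = of_int a2 * of_nat x1 * (of_int v)^2" using E1 by simp
    finally show ?thesis by simp
  qed
  have E2': "of_int a1 * of_nat x2 * (of_int v)^5 = \<nu> * (of_int u)^3 * of_int Q"
  proof -
    have "\<nu> * (of_int u)^3 * of_int Q = \<nu> * (g * of_int v)^3 * (5 * of_int A * (of_int v)^2 - 4 * of_int D * (g * of_int v)^2)"
      using gv by (simp add: Q_def)
    also have "\<dots> = (\<nu> * g ^ 3 * (5 * of_int a1 * of_nat y1 - 4 * g ^ 2 * of_int a2 * of_nat y2)) * (of_int v)^5"
      by (simp add: A_def D_def algebra_simps power_mult_distrib)
    also have "\<dots> = of_int a1 * of_nat x2 * (of_int v)^5" using E2 by simp
    finally show ?thesis by simp
  qed
  have P0: "P \<noteq> 0"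
  proof
    assume "P = 0"
    hence "(of_int a2 * of_nat x1 * (of_int v)^2 :: rat) = 0" using E1' by simp
    thus False using nz pos v0 by simp
  qed
  have "(of_int (v^2 * (a2 * int x1 * u^3 * Q)) :: rat) = of_int a2 * of_nat x1 * (of_int v)^2 * ((of_int u)^3 * of_int Q)"
    by (simp add: algebra_simps)
  also have "\<dots> = \<nu> * of_int P * ((of_int u)^3 * of_int Q)" using E1' by simp
  also have "\<dots> = (\<nu> * (of_int u)^3 * of_int Q) * of_int P" by (simp add: algebra_simps)
  also have "\<dots> = of_int a1 * of_nat x2 * (of_int v)^5 * of_int P" using E2' by simp
  also have "\<dots> = of_int (v^2 * (a1 * int x2 * v^3 * P))" by (simp add: algebra_simps)
  finally have "v^2 * (a2 * int x1 * u^3 * Q) = v^2 * (a1 * int x2 * v^3 * P)" by (simp only: of_int_eq_iff)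
  hence IE: "a2 * int x1 * u^3 * Q = a1 * int x2 * v^3 * P" using v0 by simp
  have "int x1 dvd (int x2) * (a1 * v^3 * P)"
  proof -
    have "int x1 dvd a2 * int x1 * u^3 * Q" by (simp add: dvd_mult2 dvd_mult)
    hence "int x1 dvd a1 * int x2 * v^3 * P" using IE by simp
    moreover have "a1 * int x2 * v^3 * P = (int x2) * (a1 * v^3 * P)" by (simp add: algebra_simps)
    ultimately show ?thesis by simp
  qed
  hence "int x1 dvd a1 * v^3 * P" using cx12 coprime_dvd_mult_right_iff by blast
  then obtain e where e1: "a1 * v^3 * P = int x1 * e" by (auto simp: dvd_def)
  have e2: "a2 * u^3 * Q = int x2 * e"
  proof -
    have "int x1 * (a2 * u^3 * Q) = int x1 * (int x2 * e)"
      using IE e1 by (simp add: algebra_simps)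
    thus ?thesis using pos by simp
  qed
  have "a1 dvd int x1 * e" using e1[symmetric] by (simp add: dvd_def exI[of _ "v^3 * P"] algebra_simps)
  hence "a1 dvd e" using ca1x1 coprime_dvd_mult_right_iff by blast
  moreover have "a2 dvd int x2 * e" using e2[symmetric] by (simp add: dvd_def exI[of _ "u^3 * Q"] algebra_simps)
  hence "a2 dvd e" using ca2x2 coprime_dvd_mult_right_iff by blast
  ultimately have "a1 * a2 dvd e" using ca12 by (simp add: divides_mult)
  then obtain f where ef: "e = a1 * a2 * f" by (auto simp: dvd_def)
  have hP: "v^3 * P = f * (a2 * int x1)"
  proof -
    have "a1 * (v^3 * P) = a1 * (f * (a2 * int x1))" using e1 ef by (simp add: algebra_simps)
    thus ?thesis using nz by simp
  qed
  have hQ: "u^3 * Q = f * (a1 * int x2)"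
  proof -
    have "a2 * (u^3 * Q) = a2 * (f * (a1 * int x2))" using e2 ef by (simp add: algebra_simps)
    thus ?thesis using nz by simp
  qed
  have fP: "f dvd v^3 * P" using hP by simp
  have fQ: "f dvd u^3 * Q" using hQ by simp
  have sA: "squarefree A" using sqA by (simp add: A_def)
  have sD: "squarefree D" using sqD by (simp add: D_def)
  have cAD: "coprime A D" using ca12 ca1y2 ca2y1 cy12 by (simp add: A_def D_def coprime_commute)
  have f72: "f dvd 72*u*v" using f_dvd[OF cuv sA sD cAD fP fQ P_def Q_def u0] v0 by simp
  define \<alpha> where "\<alpha> = A * v^2"
  define \<beta> where "\<beta> = D * u^2"
  define S where "S = \<alpha> + \<beta>"
  define R where "R = 4*\<alpha>^2 - 7*\<alpha>*\<beta> + 4*\<beta>^2"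
  have "e^2 * (a1 * int x1 ^ 2 * int y1 ^ 3 + a2 * int x2 ^ 2 * int y2 ^ 3)
      = a1 * int y1^3 * (int x1 * e)^2 + a2 * int y2^3 * (int x2 * e)^2"
    by (simp add: algebra_simps power2_eq_square)
  also have "\<dots> = a1 * int y1^3 * (a1 * v^3 * P)^2 + a2 * int y2^3 * (a2 * u^3 * Q)^2"
    using e1 e2 by simp
  also have "\<dots> = \<alpha>^3 * (4*\<alpha> - 5*\<beta>)^2 + \<beta>^3 * (5*\<alpha> - 4*\<beta>)^2"
    unfolding \<alpha>_def \<beta>_def P_def Q_def A_def D_def by algebra
  also have "\<dots> = S * R^2"
    unfolding S_def R_def by algebra
  finally have idt: "e^2 * (a1 * int x1 ^ 2 * int y1 ^ 3 + a2 * int x2 ^ 2 * int y2 ^ 3) = S * R^2" .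
  have main: "e^2 * (a3 * int x3^2 * int y3^3) = - (S * R^2)"
  proof -
    have "a1 * int x1 ^ 2 * int y1 ^ 3 + a2 * int x2 ^ 2 * int y2 ^ 3 = - (a3 * int x3^2 * int y3^3)"
      using eq by linarith
    thus ?thesis using idt by simp
  qed
  have sy: "squarefree (int y3)" using squarefree_multD(2)[OF sq3] .
  have nzc: "int x3 \<noteq> 0" "e \<noteq> 0" "a3 \<noteq> 0" "int y3 \<noteq> 0"
    using pos nz e1 P0 v0 by auto
  have S0': "S \<noteq> 0" using main nzc by auto
  have Hp: "p^2 dvd S" if p: "prime p" and py: "p dvd int y3" and p2: "p \<noteq> 2" and p3: "p \<noteq> 3" and p5: "p \<noteq> 5" for p
  proof -
    have nu: "\<not> is_unit p" using p not_prime_unit by blast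
    have p2': "\<not> p dvd 2" using p p2 primes_dvd_imp_eq[OF p, of 2] by auto
    have p3': "\<not> p dvd 3" using p p3 primes_dvd_imp_eq[OF p, of 3] by auto
    have p5': "\<not> p dvd 5" using p p5 primes_dvd_imp_eq[OF p, of 5] by auto
    have na1: "\<not> p dvd a1" using ca1y3 py nu coprime_common_divisor by blast
    have na2: "\<not> p dvd a2" using ca2y3 py nu coprime_common_divisor by blast
    have na3: "\<not> p dvd a3" using ca3y3 py nu coprime_common_divisor by blast
    have ny1: "\<not> p dvd int y1" using cy13 py nu coprime_common_divisor by blast
    have ny2: "\<not> p dvd int y2" using cy23 py nu coprime_common_divisor by blast
    have nA: "\<not> p dvd A" using na1 ny1 p by (simp add: A_def prime_dvd_mult_iff)
    have nD: "\<not> p dvd D" using na2 ny2 p by (simp add: D_def prime_dvd_mult_iff)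
    have n4: "\<not> p dvd 4"
    proof
      assume "p dvd 4"
      hence "p dvd 2 * 2" by simp
      thus False using p p2' prime_dvd_mult_iff by blast
    qed
    have nuv: "\<not> (p dvd u \<and> p dvd v)" using cuv nu coprime_common_divisor by blast
    have nf: "\<not> p dvd f"
    proof
      assume pf: "p dvd f"
      hence "p dvd 72*u*v" using f72 dvd_trans by blast
      moreover have "\<not> p dvd 72"
      proof
        assume "p dvd 72"
        hence "p dvd 2^3 * 3^2" by simp
        hence "p dvd 2 \<or> p dvd 3" using p prime_dvd_mult_iff prime_dvd_power by metis
        thus False using p2' p3' by blast
      qed
      ultimately have "p dvd u \<or> p dvd v" using p prime_dvd_mult_iff by metis
      thus False
      proof
        assume pu: "p dvd u"
        hence "\<not> p dvd v" using nuv by blast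
        hence "\<not> p dvd v^3" using p prime_dvd_power by blast
        moreover have "p dvd v^3 * P" using pf fP dvd_trans by blast
        ultimately have "p dvd P" using p prime_dvd_mult_iff by blast
        moreover have "u dvd 5*D*u^2" by (simp add: power2_eq_square)
        hence "p dvd 5*D*u^2" using pu dvd_trans by blast
        ultimately have "p dvd P + 5*D*u^2" by (rule dvd_add)
        hence "p dvd 4 * A * v^2" by (simp add: P_def)
        thus False using n4 nA \<open>\<not> p dvd v\<close> p prime_dvd_mult_iff prime_dvd_power by metis
      next
        assume pv: "p dvd v"
        hence "\<not> p dvd u" using nuv by blast
        hence "\<not> p dvd u^3" using p prime_dvd_power by blast
        moreover have "p dvd u^3 * Q" using pf fQ dvd_trans by blast
        ultimately have "p dvd Q" using p prime_dvd_mult_iff by blast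
        moreover have "v dvd 5*A*v^2" by (simp add: power2_eq_square)
        hence "p dvd 5*A*v^2" using pv dvd_trans by blast
        ultimately have "p dvd 5*A*v^2 - Q" by (rule dvd_diff[rotated])
        hence "p dvd 4 * D * u^2" by (simp add: Q_def)
        thus False using n4 nD \<open>\<not> p dvd u\<close> p prime_dvd_mult_iff prime_dvd_power by metis
      qed
    qed
    have ne: "\<not> p dvd e" using na1 na2 nf p by (simp add: ef prime_dvd_mult_iff)
    have SR: "\<not> p dvd R" if pS: "p dvd S"
    proof
      assume pR: "p dvd R"
      have "R = 4*S^2 - 15*(\<alpha>*\<beta>)" unfolding R_def S_def by algebra
      moreover have "S dvd 4*S^2" by (simp add: power2_eq_square)
      hence "p dvd 4*S^2" using pS dvd_trans by blast
      ultimately have "p dvd 4*S^2 - R" using pR dvd_diff by blast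
      moreover have "4*S^2 - R = 15*(\<alpha>*\<beta>)" using \<open>R = 4*S^2 - 15*(\<alpha>*\<beta>)\<close> by simp
      ultimately have "p dvd 15*(\<alpha>*\<beta>)" by simp
      moreover have "\<not> p dvd 15"
      proof
        assume "p dvd 15"
        hence "p dvd 3 * 5" by simp
        thus False using p p3' p5' prime_dvd_mult_iff by blast
      qed
      ultimately have "p dvd \<alpha> \<or> p dvd \<beta>" using p prime_dvd_mult_iff by blast
      moreover have "p dvd \<alpha> \<longleftrightarrow> p dvd \<beta>" using pS unfolding S_def
        by (metis dvd_add_right_iff dvd_add_left_iff)
      ultimately have pa: "p dvd \<alpha>" and pb: "p dvd \<beta>" by auto
      have "p dvd v" using pa nA p by (simp add: \<alpha>_def prime_dvd_mult_iff prime_dvd_power_iff)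
      moreover have "p dvd u" using pb nD p by (simp add: \<beta>_def prime_dvd_mult_iff prime_dvd_power_iff)
      ultimately show False using nuv by blast
    qed
    show ?thesis using y3_aux[OF p py sy ne na3 main nzc SR] .
  qed
  have "(int y3)^2 dvd 900 * S" using y3sq[OF sy nzc(4) S0' Hp] by blast
  hence Y3: "(int y3)^2 \<le> 900 * \<bar>S\<bar>"
    using dvd_imp_le_int[of "900*S" "(int y3)^2"] S0' by (simp add: abs_mult)
  define W where "W = a3 * int x3^2 * int y3^3"
  have absW: "\<bar>W\<bar> = \<bar>a3\<bar> * int x3^2 * int y3^3" by (simp add: W_def abs_mult)
  have eW: "e^2 * \<bar>W\<bar> = \<bar>S\<bar> * R^2"
  proof -
    have "\<bar>e^2 * W\<bar> = \<bar>S * R^2\<bar>" using main by (simp add: W_def)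
    thus ?thesis by (simp add: abs_mult)
  qed
  have Rge: "\<bar>\<alpha>*\<beta>\<bar> \<le> R"
  proof (cases "\<alpha>*\<beta> \<ge> 0")
    case True
    have "R - \<alpha>*\<beta> = 4*(\<alpha>-\<beta>)^2" unfolding R_def by algebra
    moreover have "(\<alpha>-\<beta>)^2 \<ge> 0" by simp
    ultimately show ?thesis using True by linarith
  next
    case False
    have "R + \<alpha>*\<beta> = 4*\<alpha>^2 + 4*\<beta>^2 - 6*(\<alpha>*\<beta>)" unfolding R_def by algebra
    moreover have "\<alpha>^2 \<ge> 0" "\<beta>^2 \<ge> 0" by simp_all
    ultimately show ?thesis using False by linarith
  qed
  hence R2: "(\<alpha>*\<beta>)^2 \<le> R^2" using abs_le_square_iff[of "\<alpha>*\<beta>" R] by simp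
  have "\<bar>f\<bar> \<le> \<bar>72*u*v\<bar>" using dvd_imp_le_int[OF _ f72] u0 v0 by simp
  hence f2: "f^2 \<le> 5184 * (u^2*v^2)" using abs_le_square_iff[of f "72*u*v"] by (simp add: power_mult_distrib)
  define Z where "Z = a1^2 * a2^2 * (u^2 * v^2)"
  define T where "T = (int y1 * int y2)^2"
  have Zpos: "Z > 0" using nz u0 v0 by (simp add: Z_def)
  have ab: "(\<alpha>*\<beta>)^2 = Z * (u^2*v^2) * T"
    unfolding Z_def T_def \<alpha>_def \<beta>_def A_def D_def by algebra
  have "Z * ((u^2*v^2) * (T * (int y3)^2)) = (int y3)^2 * (\<alpha>*\<beta>)^2"
    unfolding ab by algebra
  also have "(int y3)^2 * (\<alpha>*\<beta>)^2 \<le> (900 * \<bar>S\<bar>) * (\<alpha>*\<beta>)^2"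
    using Y3 by (rule mult_right_mono) simp
  also have "\<dots> \<le> (900 * \<bar>S\<bar>) * R^2" using R2 by (rule mult_left_mono) simp
  also have "\<dots> = 900 * (a1^2 * a2^2) * f^2 * \<bar>W\<bar>"
    using eW by (simp add: ef power_mult_distrib algebra_simps)
  also have "\<dots> \<le> 900 * (a1^2 * a2^2) * (5184 * (u^2*v^2)) * \<bar>W\<bar>"
    using f2 by (intro mult_right_mono mult_left_mono) simp_all
  also have "\<dots> = Z * (4665600 * \<bar>W\<bar>)" by (simp add: Z_def algebra_simps)
  finally have "Z * ((u^2*v^2) * (T * (int y3)^2)) \<le> Z * (4665600 * \<bar>W\<bar>)" .
  hence L: "(u^2*v^2) * (T * (int y3)^2) \<le> 4665600 * \<bar>W\<bar>" using Zpos by simp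
  have "0 < u^2" using u0 by simp
  hence u1: "1 \<le> u^2" by linarith
  have "0 < v^2" using v0 by simp
  hence v1: "1 \<le> v^2" by linarith
  have uv1: "1 * 1 \<le> u^2*v^2" using u1 v1 by (rule mult_mono) simp_all
  have "T * (int y3)^2 \<ge> 0" by (simp add: T_def)
  hence "1 * (T * (int y3)^2) \<le> (u^2*v^2) * (T * (int y3)^2)" using uv1
    by (intro mult_right_mono) simp_all
  hence "T * (int y3)^2 \<le> (u^2*v^2) * (T * (int y3)^2)" by simp
  hence "T * (int y3)^2 \<le> 4665600 * \<bar>W\<bar>" using L by linarith
  thus ?thesis by (simp add: T_def absW power_mult_distrib)
qed



lemma sqf_nat_of_int:
  fixes n :: nat
  assumes "squarefree (int n)"
  shows "squarefree n"
proof (rule squarefreeI)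
  fix x :: nat assume "x^2 dvd n"
  hence "(int x)^2 dvd int n" by (metis of_nat_dvd_iff of_nat_power)
  hence "int x dvd 1" using assms squarefreeD by blast
  thus "x dvd 1" by (metis of_nat_1 of_nat_dvd_iff)
qed

lemma card_eq_part:
  fixes a1 a2 a3 :: int and X1 X2 X3 Y1 Y2 Y3 :: nat
  assumes "a3 \<noteq> 0"
  shows "card (S1 a1 a2 a3 X1 X2 X3 Y1 Y2 Y3) = card (S1star a1 a2 a3 X1 X2 X3 Y1 Y2 Y3)"
proof -
  define pr :: "nat \<times> nat \<times> nat \<times> nat \<times> nat \<times> nat \<Rightarrow> nat \<times> nat \<times> nat \<times> nat"
    where "pr = (\<lambda>(x1,x2,x3,y1,y2,y3). (x1,x2,y1,y2))"
  have img: "S1star a1 a2 a3 X1 X2 X3 Y1 Y2 Y3 = pr ` S1 a1 a2 a3 X1 X2 X3 Y1 Y2 Y3"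
    unfolding S1star_def pr_def by (auto simp: image_def) (metis case_prod_conv)
  have inj: "inj_on pr (S1 a1 a2 a3 X1 X2 X3 Y1 Y2 Y3)"
  proof (rule inj_onI)
    fix s t assume s: "s \<in> S1 a1 a2 a3 X1 X2 X3 Y1 Y2 Y3" and t: "t \<in> S1 a1 a2 a3 X1 X2 X3 Y1 Y2 Y3"
      and st: "pr s = pr t"
    obtain x1 x2 x3 y1 y2 y3 where sd: "s = (x1,x2,x3,y1,y2,y3)" by (cases s) auto
    obtain x1' x2' x3' y1' y2' y3' where td: "t = (x1',x2',x3',y1',y2',y3')" by (cases t) auto
    have e: "x1' = x1" "x2' = x2" "y1' = y1" "y2' = y2" using st by (simp_all add: sd td pr_def)
    have s0: "s \<in> S0 a1 a2 a3 X1 X2 X3 Y1 Y2 Y3" using s by (simp add: sd S1_def)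
    have t0: "t \<in> S0 a1 a2 a3 X1 X2 X3 Y1 Y2 Y3" using t by (simp add: td S1_def)
    have eq1: "a1 * int x1 ^ 2 * int y1 ^ 3 + a2 * int x2 ^ 2 * int y2 ^ 3 + a3 * int x3 ^ 2 * int y3 ^ 3 = 0"
      using s0 by (simp add: sd S0_def)
    have eq2: "a1 * int x1 ^ 2 * int y1 ^ 3 + a2 * int x2 ^ 2 * int y2 ^ 3 + a3 * int x3' ^ 2 * int y3' ^ 3 = 0"
      using t0 by (simp add: td e S0_def)
    have "a3 * int x3 ^ 2 * int y3 ^ 3 = a3 * int x3' ^ 2 * int y3' ^ 3" using eq1 eq2
      by linarith
    hence "a3 * (int x3 ^ 2 * int y3 ^ 3) = a3 * (int x3' ^ 2 * int y3' ^ 3)"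
      by (simp only: mult.assoc)
    hence "int (x3^2 * y3^3) = int (x3'^2 * y3'^3)" using assms by simp
    hence E: "x3^2 * y3^3 = x3'^2 * y3'^3" by (simp only: of_nat_eq_iff)
    have p: "0 < x3" "0 < y3" using s0 by (simp_all add: sd S0_def)
    have p': "0 < x3'" "0 < y3'" using t0 by (simp_all add: td S0_def)
    have "squarefree (a3 * int y3)" using s0 by (simp add: sd S0_def)
    hence q: "squarefree y3" using squarefree_multD(2) sqf_nat_of_int by blast
    have "squarefree (a3 * int y3')" using t0 by (simp add: td S0_def)
    hence q': "squarefree y3'" using squarefree_multD(2) sqf_nat_of_int by blast
    have "y3 = y3' \<and> x3 = x3'" using sq_cube_unique[OF p(1) p'(1) p(2) p'(2) q q' E] .
    thus "s = t" using sd td e by simp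
  qed
  show ?thesis using img card_image[OF inj] by simp
qed



lemma box_card:
  fixes a1 a2 a3 :: int and X1 X2 X3 Y1 Y2 Y3 :: nat
  shows "card (S1 a1 a2 a3 X1 X2 X3 Y1 Y2 Y3) \<le> X1 * X2 * X3 * Y1 * Y2 * Y3"
proof -
  have sub: "S1 a1 a2 a3 X1 X2 X3 Y1 Y2 Y3 \<subseteq> {1..X1} \<times> {1..X2} \<times> {1..X3} \<times> {1..Y1} \<times> {1..Y2} \<times> {1..Y3}"
    by (auto simp: S1_def S0_def)
  have "card (S1 a1 a2 a3 X1 X2 X3 Y1 Y2 Y3) \<le> card ({1..X1} \<times> {1..X2} \<times> {1..X3} \<times> {1..Y1} \<times> {1..Y2} \<times> {1..Y3})"
    by (rule card_mono[OF _ sub]) simp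
  also have "\<dots> = X1 * X2 * X3 * Y1 * Y2 * Y3" by (simp add: card_cartesian_product)
  finally show ?thesis .
qed

lemma bound_B:
  fixes a1 a2 a3 :: int and B :: real and X1 X2 X3 Y1 Y2 Y3 :: nat
  assumes nz: "a1 \<noteq> 0" "a2 \<noteq> 0" "a3 \<noteq> 0" and ca12: "coprime a1 a2" and B2: "B \<ge> 2"
    and hX3: "real X3 ^ 2 * real Y3 ^ 3 \<le> 32 * B / \<bar>real_of_int a3\<bar>"
    and hY1: "B powr (1/5 - 1/90) \<le> real Y1" and hY2: "B powr (1/5 - 1/90) \<le> real Y2"
    and hY3: "B powr (1/5 - 1/90) \<le> real Y3"
    and ne: "S1 a1 a2 a3 X1 X2 X3 Y1 Y2 Y3 \<noteq> {}"
  shows "B \<le> 9555148800 powr (15/2)"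
proof -
  obtain x1 x2 x3 y1 y2 y3 where mem: "(x1,x2,x3,y1,y2,y3) \<in> S1 a1 a2 a3 X1 X2 X3 Y1 Y2 Y3"
    using ne by auto
  have S0: "(x1,x2,x3,y1,y2,y3) \<in> S0 a1 a2 a3 X1 X2 X3 Y1 Y2 Y3" using mem by (simp add: S1_def)
  have k: "(int y1 * int y2 * int y3)^2 \<le> 4665600 * (\<bar>a3\<bar> * int x3^2 * int y3^3)"
    using key[OF nz ca12 mem] .
  hence kr: "(real y1 * real y2 * real y3)^2 \<le> 4665600 * (\<bar>real_of_int a3\<bar> * real x3^2 * real y3^3)"
    by (metis (mono_tags, opaque_lifting) of_int_le_iff of_int_mult of_int_power of_int_abs of_int_of_nat_eq of_int_numeral)
  have bx: "x3 \<le> X3" "y3 \<le> Y3" using S0 by (simp_all add: S0_def)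
  have "real x3^2 * real y3^3 \<le> real X3^2 * real Y3^3"
    using bx by (intro mult_mono power_mono) simp_all
  hence "\<bar>real_of_int a3\<bar> * (real x3^2 * real y3^3) \<le> \<bar>real_of_int a3\<bar> * (real X3^2 * real Y3^3)"
    by (intro mult_left_mono) simp_all
  also have "\<dots> \<le> 32 * B" using hX3 nz(3) by (simp add: pos_le_divide_eq mult.commute)
  finally have "\<bar>real_of_int a3\<bar> * real x3^2 * real y3^3 \<le> 32 * B" by (simp add: mult.assoc)
  hence up: "(real y1 * real y2 * real y3)^2 \<le> 4665600 * (32 * B)" using kr by linarith
  define L where "L = B powr (1/5 - 1/90)"
  have L0: "L \<ge> 0" by (simp add: L_def)
  have ly: "L / 2 \<le> real y1" "L / 2 \<le> real y2" "L / 2 \<le> real y3"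
    using S0 hY1 hY2 hY3 by (simp_all add: S0_def L_def)
  have "(L/2) * (L/2) * (L/2) \<le> real y1 * real y2 * real y3"
    using ly L0 by (intro mult_mono) simp_all
  hence "((L/2) * (L/2) * (L/2))^2 \<le> (real y1 * real y2 * real y3)^2"
    using L0 by (intro power_mono) simp_all
  moreover have "((L/2) * (L/2) * (L/2))^2 = L^6 / 64" by (simp add: power2_eq_square field_simps eval_nat_numeral)
  moreover have "L^6 = B powr (17/15)" using B2 by (simp add: L_def powr_power)
  ultimately have "B powr (17/15) \<le> 64 * (4665600 * (32 * B))" using up by linarith
  moreover have "B powr (17/15) = B powr (2/15) * B" using B2 powr_add[of B "2/15" 1] by simp
  ultimately have "B powr (2/15) * B \<le> 9555148800 * B" by simp
  hence b1: "B powr (2/15) \<le> 9555148800" using B2 by simp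
  have "B = (B powr (2/15)) powr (15/2)" using B2 by (simp add: powr_powr)
  also have "\<dots> \<le> 9555148800 powr (15/2)" using b1 by (intro powr_mono2) simp_all
  finally show ?thesis .
qed



lemma main_lemma:
  fixes a1 a2 a3 :: int and B :: real and X1 X2 X3 Y1 Y2 Y3 :: nat
  assumes H: "a1 \<noteq> 0 \<and> a2 \<noteq> 0 \<and> a3 \<noteq> 0 \<and>
      squarefree a1 \<and> squarefree a2 \<and> squarefree a3 \<and>
      coprime a1 a2 \<and> coprime a1 a3 \<and> coprime a2 a3 \<and>
      B \<ge> 2 \<and>
      pow2 X1 \<and> pow2 X2 \<and> pow2 X3 \<and> pow2 Y1 \<and> pow2 Y2 \<and> pow2 Y3 \<and>
      real X1 \<le> 2 * B \<and> real X2 \<le> 2 * B \<and> real X3 \<le> 2 * B \<and>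
      real Y1 \<le> 2 * B \<and> real Y2 \<le> 2 * B \<and> real Y3 \<le> 2 * B \<and>
      real X1 ^ 2 * real Y1 ^ 3 \<le> 32 * B / \<bar>real_of_int a1\<bar> \<and>
      real X2 ^ 2 * real Y2 ^ 3 \<le> 32 * B / \<bar>real_of_int a2\<bar> \<and>
      real X3 ^ 2 * real Y3 ^ 3 \<le> 32 * B / \<bar>real_of_int a3\<bar> \<and>
      (\<forall>Xk \<in> {X1, X2, X3}. B powr (1/5 - 1/60) \<le> real Xk \<and> real Xk \<le> B powr (1/5 + 1/60)) \<and>
      (\<forall>Yk \<in> {Y1, Y2, Y3}. B powr (1/5 - 1/90) \<le> real Yk \<and> real Yk \<le> B powr (1/5 + 1/90))"
  shows "card (S1 a1 a2 a3 X1 X2 X3 Y1 Y2 Y3) = card (S1star a1 a2 a3 X1 X2 X3 Y1 Y2 Y3) \<and>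
      real (card (S1 a1 a2 a3 X1 X2 X3 Y1 Y2 Y3)) \<le> ((2 * 9555148800 powr (15/2))^6 + 1) * B powr (1/2)"
proof -
  define C :: real where "C = (2 * 9555148800 powr (15/2))^6 + 1"
  have C0: "C > 0" unfolding C_def by (simp add: add_pos_nonneg)
  have nz: "a1 \<noteq> 0" "a2 \<noteq> 0" "a3 \<noteq> 0" using H by blast+
  have ca12: "coprime a1 a2" using H by blast
  have B2: "B \<ge> 2" using H by blast
  have hX3: "real X3 ^ 2 * real Y3 ^ 3 \<le> 32 * B / \<bar>real_of_int a3\<bar>" using H by blast
  have Xb: "real X1 \<le> 2 * B" "real X2 \<le> 2 * B" "real X3 \<le> 2 * B"
     "real Y1 \<le> 2 * B" "real Y2 \<le> 2 * B" "real Y3 \<le> 2 * B" using H by blast+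
  have Yall: "\<forall>Yk \<in> {Y1, Y2, Y3}. B powr (1/5 - 1/90) \<le> real Yk \<and> real Yk \<le> B powr (1/5 + 1/90)"
    using H by blast
  hence Yl: "B powr (1/5 - 1/90) \<le> real Y1" "B powr (1/5 - 1/90) \<le> real Y2" "B powr (1/5 - 1/90) \<le> real Y3"
    by simp_all
  have ceq: "card (S1 a1 a2 a3 X1 X2 X3 Y1 Y2 Y3) = card (S1star a1 a2 a3 X1 X2 X3 Y1 Y2 Y3)"
    by (rule card_eq_part[OF nz(3)])
  have pw: "1 \<le> B powr (1/2)" using B2 by (intro ge_one_powr_ge_zero) simp_all
  have bnd: "real (card (S1 a1 a2 a3 X1 X2 X3 Y1 Y2 Y3)) \<le> C * B powr (1/2)"
  proof (cases "S1 a1 a2 a3 X1 X2 X3 Y1 Y2 Y3 = {}")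
    case True
    thus ?thesis using C0 by simp
  next
    case False
    define B0 :: real where "B0 = 9555148800 powr (15/2)"
    have BB0: "B \<le> B0" unfolding B0_def using bound_B[OF nz ca12 B2 hX3 Yl False] .
    have "real (card (S1 a1 a2 a3 X1 X2 X3 Y1 Y2 Y3)) \<le> real (X1 * X2 * X3 * Y1 * Y2 * Y3)"
      using box_card by (simp only: of_nat_le_iff)
    also have "\<dots> = real X1 * real X2 * real X3 * real Y1 * real Y2 * real Y3" by simp
    also have "\<dots> \<le> (2*B) * (2*B) * (2*B) * (2*B) * (2*B) * (2*B)"
      using Xb by (intro mult_mono) simp_all
    also have "\<dots> = (2*B)^6" by (simp add: eval_nat_numeral)
    also have "\<dots> \<le> (2*B0)^6" using BB0 B2 by (intro power_mono) simp_all
    also have "\<dots> \<le> C" by (simp add: C_def B0_def)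
    also have "\<dots> \<le> C * B powr (1/2)" using pw C0 by simp
    finally show ?thesis .
  qed
  show ?thesis using ceq bnd by (simp add: C_def)
qed

theorem lemma15:
  "\<exists>C::real. C > 0 \<and>
    (\<forall>(a1::int) (a2::int) (a3::int) (B::real) (X1::nat) X2 X3 (Y1::nat) Y2 Y3.
      a1 \<noteq> 0 \<and> a2 \<noteq> 0 \<and> a3 \<noteq> 0 \<and>
      squarefree a1 \<and> squarefree a2 \<and> squarefree a3 \<and>
      coprime a1 a2 \<and> coprime a1 a3 \<and> coprime a2 a3 \<and>
      B \<ge> 2 \<and>
      pow2 X1 \<and> pow2 X2 \<and> pow2 X3 \<and> pow2 Y1 \<and> pow2 Y2 \<and> pow2 Y3 \<and>
      real X1 \<le> 2 * B \<and> real X2 \<le> 2 * B \<and> real X3 \<le> 2 * B \<and>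
      real Y1 \<le> 2 * B \<and> real Y2 \<le> 2 * B \<and> real Y3 \<le> 2 * B \<and>
      real X1 ^ 2 * real Y1 ^ 3 \<le> 32 * B / \<bar>real_of_int a1\<bar> \<and>
      real X2 ^ 2 * real Y2 ^ 3 \<le> 32 * B / \<bar>real_of_int a2\<bar> \<and>
      real X3 ^ 2 * real Y3 ^ 3 \<le> 32 * B / \<bar>real_of_int a3\<bar> \<and>
      (\<forall>Xk \<in> {X1, X2, X3}. B powr (1/5 - 1/60) \<le> real Xk \<and> real Xk \<le> B powr (1/5 + 1/60)) \<and>
      (\<forall>Yk \<in> {Y1, Y2, Y3}. B powr (1/5 - 1/90) \<le> real Yk \<and> real Yk \<le> B powr (1/5 + 1/90))
      \<longrightarrow>
      card (S1 a1 a2 a3 X1 X2 X3 Y1 Y2 Y3) = card (S1star a1 a2 a3 X1 X2 X3 Y1 Y2 Y3) \<and>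
      real (card (S1 a1 a2 a3 X1 X2 X3 Y1 Y2 Y3)) \<le> C * B powr (1/2))"
proof -
  have C0: "((2 * 9555148800 powr (15/2))^6 + 1 :: real) > 0" by (simp add: add_pos_nonneg)
  show ?thesis
    apply (rule exI[of _ "(2 * 9555148800 powr (15/2))^6 + 1"])
    apply (rule conjI[OF C0])
    apply (intro allI impI)
    apply (erule main_lemma)
    done
qed


end
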